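(* Let $\Theta=\{\theta_1,\dots,\theta_N\}$ be a finite set of $N\ge 1$ distinct elements, and let $PES(\Theta)=\{A_{ij} : i=0,\dots,N;\ j=1,\dots,P(N,i)\}$ be its permutation event space, where $P(N,i)=\frac{N!}{(N-i)!}$. For $i\ge 0$ let $F(i)=\sum_{k=0}^{i}P(i,k)=\sum_{k=0}^{i}\frac{i!}{(i-k)!}$, and set $S=\sum_{i=1}^{N}P(N,i)\,(F(i)-1)$. Consider the entropy $$H_{RPS}(\mathscr{M})=-\sum_{i=1}^{N}\sum_{j=1}^{P(N,i)}\mathscr{M}(A_{ij})\log\left(\frac{\mathscr{M}(A_{ij})}{F(i)-1}\right)$$ as a function on the set of all permutation mass functions $\mathscr{M}$ on $PES(\Theta)$. Then $H_{RPS}(\mathscr{M})$ attains its maximum value if and only if $$\mathscr{M}(A_{ij})=\frac{F(i)-1}{S}\quad\text{for all } i=1,\dots,N,\ j=1,\dots,P(N,i).$$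
   Context: The permutation event space $PES(\Theta)$ is the set of all ordered tuples of distinct elements of $\Theta$ (including the empty tuple $\emptyset=A_{01}$): for each $i\in\{0,\dots,N\}$, the tuples of length $i$ are enumerated as $A_{i1},\dots,A_{i,P(N,i)}$, e.g. for $\Theta=\{\theta_1,\theta_2\}$, $PES(\Theta)=\{\emptyset,(\theta_1),(\theta_2),(\theta_1,\theta_2),(\theta_2,\theta_1)\}$. A permutation mass function (PMF) is a map $\mathscr{M}:PES(\Theta)\to[0,1]$ with $\mathscr{M}(\emptyset)=0$ and $\sum_{A\in PES(\Theta)}\mathscr{M}(A)=1$. The logarithm has a fixed base $b>1$, and the convention $0\log 0=0$ is used. *)

theory Defs
  imports Complex_Main
begin

definition PES :: "'a set \<Rightarrow> 'a list set" where
  "PES \<Theta> = {xs. distinct xs \<and> set xs \<subseteq> \<Theta>}"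

definition Pnum :: "nat \<Rightarrow> nat \<Rightarrow> real" where
  "Pnum n i = fact n / fact (n - i)"

definition Fsum :: "nat \<Rightarrow> real" where
  "Fsum i = (\<Sum>k=0..i. Pnum i k)"

definition is_PMF :: "'a set \<Rightarrow> ('a list \<Rightarrow> real) \<Rightarrow> bool" where
  "is_PMF \<Theta> M \<longleftrightarrow> (\<forall>A\<in>PES \<Theta>. 0 \<le> M A \<and> M A \<le> 1) \<and> M [] = 0
     \<and> (\<Sum>A\<in>PES \<Theta>. M A) = 1"

text \<open>RPS entropy with log base b; 0 log 0 = 0 holds since log b 0 = 0 in Isabelle.\<close>
definition H_RPS :: "real \<Rightarrow> 'a set \<Rightarrow> ('a list \<Rightarrow> real) \<Rightarrow> real" where
  "H_RPS b \<Theta> M = - (\<Sum>i=1..card \<Theta>. \<Sum>A\<in>{A\<in>PES \<Theta>. length A = i}.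
       M A * log b (M A / (Fsum i - 1)))"

definition S_const :: "nat \<Rightarrow> real" where
  "S_const N = (\<Sum>i=1..N. Pnum N i * (Fsum i - 1))"

end

theory Submission
  imports Defs
begin

lemma gibbs:
  fixes p w :: "'b \<Rightarrow> real"
  assumes fin: "finite X" and p0: "\<forall>x\<in>X. 0 \<le> p x" and p1: "sum p X = 1"
    and wpos: "\<forall>x\<in>X. 0 < w x"
  shows "(\<Sum>x\<in>X. p x * ln (w x / p x)) \<le> ln (sum w X)"
    and "(\<Sum>x\<in>X. p x * ln (w x / p x)) = ln (sum w X) \<Longrightarrow> \<forall>x\<in>X. p x = w x / sum w X"
proof -
  have ne: "X \<noteq> {}" using p1 by auto
  define W where "W = sum w X"
  have Wpos: "W > 0" unfolding W_def using fin ne wpos by (simp add: sum_pos)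
  define t where "t x = p x * ln (w x / p x) - p x * ln W - (w x / W - p x)" for x
  have tle: "t x \<le> 0" if "x \<in> X" for x
  proof (cases "p x = 0")
    case True
    have "w x > 0" using wpos that by auto
    then show ?thesis using True Wpos by (simp add: t_def)
  next
    case False
    then have pp: "p x > 0" using p0 that by force
    have wx: "w x > 0" using wpos that by auto
    have "ln (w x / (p x * W)) \<le> w x / (p x * W) - 1"
      using pp wx Wpos by (intro ln_le_minus_one) simp
    hence "p x * ln (w x / (p x * W)) \<le> p x * (w x / (p x * W) - 1)"
      using pp by (intro mult_left_mono) auto
    moreover have "ln (w x / (p x * W)) = ln (w x / p x) - ln W"
      using pp wx Wpos by (simp add: ln_div ln_mult)
    moreover have "p x * (w x / (p x * W) - 1) = w x / W - p x"
      using pp Wpos by (simp add: field_simps)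
    ultimately have "p x * (ln (w x / p x) - ln W) \<le> w x / W - p x" by simp
    then show ?thesis unfolding t_def by (simp add: algebra_simps)
  qed
  have sumt: "sum t X = (\<Sum>x\<in>X. p x * ln (w x / p x)) - ln W"
  proof -
    have "sum t X = (\<Sum>x\<in>X. p x * ln (w x / p x)) - sum p X * ln W - (sum w X / W - sum p X)"
      unfolding t_def by (simp add: sum_subtractf sum_distrib_right sum_divide_distrib)
    also have "\<dots> = (\<Sum>x\<in>X. p x * ln (w x / p x)) - ln W"
      using p1 Wpos by (simp add: W_def[symmetric])
    finally show ?thesis .
  qed
  have "sum t X \<le> 0" using tle by (simp add: sum_nonpos)
  then show "(\<Sum>x\<in>X. p x * ln (w x / p x)) \<le> ln (sum w X)" using sumt W_def by simp
  assume eq: "(\<Sum>x\<in>X. p x * ln (w x / p x)) = ln (sum w X)"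
  hence "sum t X = 0" using sumt W_def by simp
  hence "(\<Sum>x\<in>X. - t x) = 0" by (simp add: sum_negf)
  hence "\<forall>x\<in>X. - t x = 0"
    using sum_nonneg_eq_0_iff[OF fin, of "\<lambda>x. - t x"] tle by force
  hence t0: "\<forall>x\<in>X. t x = 0" by simp
  show "\<forall>x\<in>X. p x = w x / sum w X"
  proof
    fix x assume xX: "x \<in> X"
    have wx: "w x > 0" using wpos xX by auto
    have px: "p x \<noteq> 0"
    proof
      assume "p x = 0"
      then have "t x = - (w x / W)" by (simp add: t_def)
      then show False using t0 xX wx Wpos by simp
    qed
    then have pp: "p x > 0" using p0 xX by force
    have "ln (w x / (p x * W)) = ln (w x / p x) - ln W"
      using pp wx Wpos by (simp add: ln_div ln_mult)
    moreover have "p x * (w x / (p x * W) - 1) = w x / W - p x"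
      using pp Wpos by (simp add: field_simps)
    moreover have "p x * (ln (w x / p x) - ln W) = w x / W - p x"
      using t0 xX unfolding t_def by (simp add: algebra_simps)
    ultimately have "p x * ln (w x / (p x * W)) = p x * (w x / (p x * W) - 1)"
      by simp
    hence "ln (w x / (p x * W)) = w x / (p x * W) - 1" using pp by simp
    hence "w x / (p x * W) = 1" using pp wx Wpos by (intro ln_eq_minus_one) auto
    thus "p x = w x / sum w X" using pp Wpos W_def by (simp add: field_simps)
  qed
qed

lemma finite_PES: "finite \<Theta> \<Longrightarrow> finite (PES \<Theta>)"
proof -
  assume "finite \<Theta>"
  then have "finite {xs. set xs \<subseteq> \<Theta> \<and> distinct xs}" by (rule finite_subset_distinct)
  moreover have "PES \<Theta> = {xs. set xs \<subseteq> \<Theta> \<and> distinct xs}" unfolding PES_def by auto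
  ultimately show ?thesis by simp
qed

lemma PES_len: "finite \<Theta> \<Longrightarrow> A \<in> PES \<Theta> \<Longrightarrow> length A \<le> card \<Theta>"
  unfolding PES_def by (metis (mono_tags) card_mono distinct_card mem_Collect_eq)

lemma card_PES_len:
  assumes "finite \<Theta>" "i \<le> card \<Theta>"
  shows "real (card {A\<in>PES \<Theta>. length A = i}) = Pnum (card \<Theta>) i"
proof -
  have "{A\<in>PES \<Theta>. length A = i} = {xs. length xs = i \<and> distinct xs \<and> set xs \<subseteq> \<Theta>}"
    unfolding PES_def by auto
  then have "card {A\<in>PES \<Theta>. length A = i} = \<Prod>{card \<Theta> - i + 1 .. card \<Theta>}"
    using card_lists_distinct_length_eq[OF assms] by simp
  moreover have "(fact (card \<Theta>) :: nat) = fact (card \<Theta> - i) * \<Prod>{card \<Theta> - i + 1 .. card \<Theta>}"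
    using fact_eq_fact_times[of "card \<Theta> - i" "card \<Theta>"] by simp
  then have "(fact (card \<Theta>) :: real) = fact (card \<Theta> - i) * real (\<Prod>{card \<Theta> - i + 1 .. card \<Theta>})"
    by (metis of_nat_fact of_nat_mult)
  ultimately show ?thesis unfolding Pnum_def by simp
qed

lemma Fsum_pos: "i \<ge> 1 \<Longrightarrow> Fsum i - 1 \<ge> 1"
proof -
  assume i: "i \<ge> 1"
  have "(\<Sum>k\<in>{0,1}. Pnum i k) \<le> (\<Sum>k=0..i. Pnum i k)"
    using i by (intro sum_mono2) (auto simp: Pnum_def)
  moreover have "Pnum i 0 = 1" by (simp add: Pnum_def)
  moreover have "Pnum i 1 = i" using i
    by (simp add: Pnum_def fact_reduce[of i])
  ultimately show ?thesis using i unfolding Fsum_def by simp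
qed


lemma regroup:
  assumes fin: "finite \<Theta>"
  shows "(\<Sum>i=1..card \<Theta>. \<Sum>A\<in>{A\<in>PES \<Theta>. length A = i}. f A i)
       = (\<Sum>A\<in>{A\<in>PES \<Theta>. A \<noteq> []}. f A (length A))"
proof -
  let ?X = "{A\<in>PES \<Theta>. A \<noteq> []}"
  have finX: "finite ?X" using finite_PES[OF fin] by simp
  have img: "length ` ?X \<subseteq> {1..card \<Theta>}" using PES_len[OF fin]
    by (auto simp: Suc_le_eq)
  have "(\<Sum>A\<in>?X. f A (length A)) = (\<Sum>i\<in>{1..card \<Theta>}. \<Sum>A\<in>{x\<in>?X. length x = i}. f A (length A))"
    using sum.group[OF finX _ img, of "\<lambda>A. f A (length A)"] by simp
  also have "\<dots> = (\<Sum>i=1..card \<Theta>. \<Sum>A\<in>{A\<in>PES \<Theta>. length A = i}. f A i)"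
  proof (rule sum.cong)
    fix i assume "i \<in> {1..card \<Theta>}"
    then have "{x\<in>?X. length x = i} = {A\<in>PES \<Theta>. length A = i}" by auto
    then show "(\<Sum>A\<in>{x\<in>?X. length x = i}. f A (length A)) = (\<Sum>A\<in>{A\<in>PES \<Theta>. length A = i}. f A i)"
      by simp
  qed simp
  finally show ?thesis by simp
qed

lemma W_eq:
  assumes fin: "finite \<Theta>"
  shows "(\<Sum>A\<in>{A\<in>PES \<Theta>. A \<noteq> []}. Fsum (length A) - 1) = S_const (card \<Theta>)"
proof -
  have "(\<Sum>A\<in>{A\<in>PES \<Theta>. A \<noteq> []}. Fsum (length A) - 1)
      = (\<Sum>i=1..card \<Theta>. \<Sum>A\<in>{A\<in>PES \<Theta>. length A = i}. Fsum i - 1)"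
    using regroup[OF fin, of "\<lambda>A i. Fsum i - 1"] by simp
  also have "\<dots> = (\<Sum>i=1..card \<Theta>. Pnum (card \<Theta>) i * (Fsum i - 1))"
    by (rule sum.cong) (auto simp: card_PES_len[OF fin])
  finally show ?thesis unfolding S_const_def .
qed

lemma H_eq:
  assumes fin: "finite \<Theta>" and nn: "\<forall>A\<in>PES \<Theta>. 0 \<le> M A"
  shows "H_RPS b \<Theta> M = (\<Sum>A\<in>{A\<in>PES \<Theta>. A \<noteq> []}. M A * ln ((Fsum (length A) - 1) / M A)) / ln b"
proof -
  have "H_RPS b \<Theta> M = - (\<Sum>A\<in>{A\<in>PES \<Theta>. A \<noteq> []}. M A * log b (M A / (Fsum (length A) - 1)))"
    unfolding H_RPS_def using regroup[OF fin, of "\<lambda>A i. M A * log b (M A / (Fsum i - 1))"] by simp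
  also have "\<dots> = (\<Sum>A\<in>{A\<in>PES \<Theta>. A \<noteq> []}. (M A * ln ((Fsum (length A) - 1) / M A)) / ln b)"
    unfolding sum_negf[symmetric]
  proof (rule sum.cong)
    fix A assume A: "A \<in> {A\<in>PES \<Theta>. A \<noteq> []}"
    then have w: "Fsum (length A) - 1 \<ge> 1" by (intro Fsum_pos) (cases A, auto)
    show "- (M A * log b (M A / (Fsum (length A) - 1))) = (M A * ln ((Fsum (length A) - 1) / M A)) / ln b"
    proof (cases "M A = 0")
      case False
      then have "M A > 0" using nn A by force
      then show ?thesis using w by (simp add: log_def ln_div algebra_simps minus_divide_left)
    qed simp
  qed simp
  also have "\<dots> = (\<Sum>A\<in>{A\<in>PES \<Theta>. A \<noteq> []}. M A * ln ((Fsum (length A) - 1) / M A)) / ln b"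
    by (simp add: sum_divide_distrib)
  finally show ?thesis .
qed


theorem theorem3:
  fixes \<Theta> :: "'a set" and b :: real and M :: "'a list \<Rightarrow> real"
  assumes "finite \<Theta>" and "card \<Theta> \<ge> 1" and "b > 1"
    and "is_PMF \<Theta> M"
  shows "(\<forall>M'. is_PMF \<Theta> M' \<longrightarrow> H_RPS b \<Theta> M' \<le> H_RPS b \<Theta> M) \<longleftrightarrow>
         (\<forall>A\<in>PES \<Theta>. A \<noteq> [] \<longrightarrow>
            M A = (Fsum (length A) - 1) / S_const (card \<Theta>))"
proof -
  note fin = assms(1)
  define X where "X = {A\<in>PES \<Theta>. A \<noteq> []}"
  define w where "w A = Fsum (length A) - 1" for A :: "'a list"
  define W where "W = S_const (card \<Theta>)"
  define G where "G M' = (\<Sum>A\<in>X. M' A * ln (w A / M' A))" for M' :: "'a list \<Rightarrow> real"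
  have finX: "finite X" unfolding X_def using finite_PES[OF fin] by simp
  have wpos: "\<forall>A\<in>X. 0 < w A"
  proof
    fix A assume "A \<in> X"
    then have "w A \<ge> 1" unfolding X_def w_def by (intro Fsum_pos) (cases A, auto)
    then show "0 < w A" by simp
  qed
  have sumW: "sum w X = W" unfolding X_def w_def W_def using W_eq[OF fin] by simp
  have PESX: "PES \<Theta> = insert [] X" "[] \<notin> X" unfolding X_def PES_def by auto
  have lnb: "ln b > 0" using assms(3) by simp
  have Hd: "H_RPS b \<Theta> M' = G M' / ln b" if "is_PMF \<Theta> M'" for M'
    using H_eq[OF fin, of M' b] that unfolding is_PMF_def G_def X_def w_def by simp
  have sum1: "sum M' X = 1" if "is_PMF \<Theta> M'" for M'
    using that PESX finX unfolding is_PMF_def by (simp add: sum.insert)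
  have nnX: "\<forall>A\<in>X. 0 \<le> M' A" if "is_PMF \<Theta> M'" for M'
    using that PESX unfolding is_PMF_def by auto
  have Gle: "G M' \<le> ln W" if "is_PMF \<Theta> M'" for M'
    using gibbs(1)[OF finX nnX[OF that] sum1[OF that] wpos] sumW G_def by simp
  have Wpos: "W > 0" using sumW wpos finX sum1[OF assms(4)] by (metis empty_iff sum.empty sum_pos zero_neq_one)
  define Ms where "Ms A = (if A = [] then 0 else w A / W)" for A
  have GMs: "G Ms = ln W"
  proof -
    have "G Ms = (\<Sum>A\<in>X. w A / W * ln W)"
      unfolding G_def Ms_def using PESX(2) wpos Wpos by (intro sum.cong) auto
    also have "\<dots> = ln W" using sumW Wpos by (simp add: sum_distrib_right[symmetric] sum_divide_distrib[symmetric])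
    finally show ?thesis .
  qed
  have pmfMs: "is_PMF \<Theta> Ms"
    unfolding is_PMF_def
  proof (intro conjI ballI)
    fix A assume A: "A \<in> PES \<Theta>"
    show "0 \<le> Ms A" using wpos Wpos A PESX unfolding Ms_def by (auto intro: less_imp_le)
    show "Ms A \<le> 1"
    proof (cases "A = []")
      case False
      then have AX: "A \<in> X" using A PESX by auto
      have "w A \<le> sum w X" using member_le_sum[OF AX, of w] wpos finX by (auto intro: less_imp_le)
      then show ?thesis using False Wpos sumW unfolding Ms_def by simp
    qed (simp add: Ms_def)
  next
    show "Ms [] = 0" by (simp add: Ms_def)
    have "sum Ms (PES \<Theta>) = sum Ms X" using PESX finX by (simp add: Ms_def)
    also have "\<dots> = (\<Sum>A\<in>X. w A / W)" unfolding Ms_def using PESX(2) by (intro sum.cong) auto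
    also have "\<dots> = 1" using sumW Wpos by (simp add: sum_divide_distrib[symmetric])
    finally show "sum Ms (PES \<Theta>) = 1" .
  qed
  show ?thesis
  proof
    assume max: "\<forall>M'. is_PMF \<Theta> M' \<longrightarrow> H_RPS b \<Theta> M' \<le> H_RPS b \<Theta> M"
    have "G Ms / ln b \<le> G M / ln b" using max pmfMs Hd assms(4) by metis
    then have "G Ms \<le> G M" using lnb by (simp add: divide_right_mono_neg divide_le_cancel)
    then have "G M = ln (sum w X)" using Gle[OF assms(4)] GMs sumW by simp
    then have "\<forall>A\<in>X. M A = w A / sum w X"
      using gibbs(2)[OF finX nnX[OF assms(4)] sum1[OF assms(4)] wpos] unfolding G_def by simp
    then show "\<forall>A\<in>PES \<Theta>. A \<noteq> [] \<longrightarrow> M A = (Fsum (length A) - 1) / S_const (card \<Theta>)"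
      using sumW unfolding X_def w_def W_def by simp
  next
    assume opt: "\<forall>A\<in>PES \<Theta>. A \<noteq> [] \<longrightarrow> M A = (Fsum (length A) - 1) / S_const (card \<Theta>)"
    have "G M = G Ms" unfolding G_def Ms_def
      using opt PESX(2) by (intro sum.cong) (auto simp: X_def w_def W_def)
    show "\<forall>M'. is_PMF \<Theta> M' \<longrightarrow> H_RPS b \<Theta> M' \<le> H_RPS b \<Theta> M"
    proof (intro allI impI)
      fix M' assume "is_PMF \<Theta> M'"
      then have "G M' \<le> G M" using Gle \<open>G M = G Ms\<close> GMs by simp
      then show "H_RPS b \<Theta> M' \<le> H_RPS b \<Theta> M"
        using Hd[OF \<open>is_PMF \<Theta> M'\<close>] Hd[OF assms(4)] lnb by (simp add: divide_right_mono)
    qed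
  qed
qed

end
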